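(* Let $A\in\mathbb{R}^{m\times n}$, $G:\mathbb{R}^k\to\mathbb{R}^n$, $\epsilon_{\max}\ge0$, let $l$ be a positive integer and $C_0,C_1,\delta,t\ge0$. (i) (Sufficiency.) Suppose that for all $\eta\in T_A(2\epsilon_{\max})$, $$\|\eta\|_2\le\frac{C_0}{2}l^{-t}\sigma_{2l,G'}(\eta)+C_1\epsilon_{\max}+\delta.$$ Then the decoder $\Delta(y)=\arg\min_{x:\|Ax-y\|_2\le\epsilon_{\max}}\sigma_{l,G}(x)$ satisfies, for all $x\in\mathbb{R}^n$ and all $\epsilon$ with $\|\epsilon\|_2\le\epsilon_{\max}$, $$\|x-\Delta(Ax+\epsilon)\|_2\le C_0l^{-t}\sigma_{l,G}(x)+C_1\epsilon_{\max}+\delta.$$ (ii) (Necessity.) Conversely, if some decoder $\Delta:\mathbb{R}^m\to\mathbb{R}^n$ satisfies $\|x-\Delta(Ax+\epsilon)\|_2\le C_0l^{-t}\sigma_{l,G}(x)+C_1\epsilon_{\max}+\delta$ for all $x\in\mathbb{R}^n$ and all $\|\epsilon\|_2\le\epsilon_{\max}$, then for all $\eta\in T_A(\epsilon_{\max})$, $$\|\eta\|_2\le C_0l^{-t}\sigma_{2l,G'}(\eta)+2C_1\epsilon_{\max}+2\delta.$$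
   Context: For $v\in\mathbb{R}^n$ and $s\ge0$, $S_s(v)=\{x\in\mathbb{R}^n:\|x-v\|_0\le s\}$ ($\|\cdot\|_0$ counts nonzero coordinates), and $S_s=S_s(0)$. For a function $H$ with domain $D$, $S_{s,H}=\bigcup_{w\in D}S_s(H(w))$ and $\sigma_{s,H}(x)=\inf_{\hat x\in S_{s,H}}\|x-\hat x\|_1$. The difference function $G':\mathbb{R}^k\times\mathbb{R}^k\to\mathbb{R}^n$ is $G'(z_1,z_2)=G(z_1)-G(z_2)$, so $S_{s,G'}=\{G(z_1)-G(z_2)+\nu: z_1,z_2\in\mathbb{R}^k,\ \nu\in S_s\}$. The $\epsilon$-tube of $A$ is $T_A(\epsilon)=\{w\in\mathbb{R}^n:\|Aw\|_2\le\epsilon\}$. *)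

theory Defs
  imports "HOL-Analysis.Analysis"
begin

definition l0norm :: "real^'n \<Rightarrow> nat" where
  "l0norm x = card {i. x $ i \<noteq> 0}"

definition l1norm :: "real^'n \<Rightarrow> real" where
  "l1norm x = (\<Sum>i\<in>UNIV. \<bar>x $ i\<bar>)"

definition sparse_around :: "nat \<Rightarrow> real^'n \<Rightarrow> (real^'n) set" where
  "sparse_around s v = {x. l0norm (x - v) \<le> s}"

definition sparse_model :: "nat \<Rightarrow> ('d \<Rightarrow> real^'n) \<Rightarrow> (real^'n) set" where
  "sparse_model s H = (\<Union>w. sparse_around s (H w))"

definition sigma :: "nat \<Rightarrow> ('d \<Rightarrow> real^'n) \<Rightarrow> real^'n \<Rightarrow> real" where
  "sigma s H x = Inf {l1norm (x - xh) | xh. xh \<in> sparse_model s H}"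

definition Gdiff :: "('k \<Rightarrow> real^'n) \<Rightarrow> ('k \<times> 'k) \<Rightarrow> real^'n" where
  "Gdiff G = (\<lambda>(z1, z2). G z1 - G z2)"

definition tube :: "real^'n^'m \<Rightarrow> real \<Rightarrow> (real^'n) set" where
  "tube A e = {w. norm (A *v w) \<le> e}"

end

theory Submission
  imports Defs
begin

lemma l1_nonneg: "l1norm x \<ge> 0"
  unfolding l1norm_def by (simp add: sum_nonneg)

lemma l1_tri: "l1norm (a + b) \<le> l1norm a + l1norm b"
  unfolding l1norm_def by (simp add: sum.distrib[symmetric] sum_mono abs_triangle_ineq)

lemma l1_minus: "l1norm (a - b) = l1norm (b - a)"
  unfolding l1norm_def by (simp add: abs_minus_commute)

lemma l0_add: "l0norm (a + b) \<le> l0norm a + l0norm (b::real^'n)"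
proof -
  have "{i. (a+b) $ i \<noteq> 0} \<subseteq> {i. a $ i \<noteq> 0} \<union> {i. b $ i \<noteq> 0}" by auto
  hence "card {i. (a+b) $ i \<noteq> 0} \<le> card ({i. a $ i \<noteq> 0} \<union> {i. b $ i \<noteq> 0})"
    by (intro card_mono) auto
  also have "\<dots> \<le> card {i. a $ i \<noteq> 0} + card {i. b $ i \<noteq> 0}" by (rule card_Un_le)
  finally show ?thesis unfolding l0norm_def .
qed

lemma model_nonempty: "H w \<in> sparse_model s H"
  unfolding sparse_model_def sparse_around_def l0norm_def by (auto intro!: exI[where x=w])

lemma sigma_le: "xh \<in> sparse_model s H \<Longrightarrow> sigma s H x \<le> l1norm (x - xh)"
  unfolding sigma_def
  by (rule cInf_lower) (auto intro: bdd_belowI[where m=0] simp: l1_nonneg)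

lemma sigma_ge: "(\<And>xh. xh \<in> sparse_model s H \<Longrightarrow> a \<le> l1norm (x - xh)) \<Longrightarrow> a \<le> sigma s H x"
  unfolding sigma_def
  by (rule cInf_greatest) (auto intro: model_nonempty)

lemma sigma_nonneg: "sigma s H x \<ge> 0"
  by (rule sigma_ge) (simp add: l1_nonneg)

lemma sigma_ge_mult:
  assumes "c \<ge> 0" "\<And>xh. xh \<in> sparse_model s H \<Longrightarrow> a \<le> c * l1norm (x - xh)"
  shows "a \<le> c * sigma s H x"
proof (cases "c = 0")
  case True
  then show ?thesis using assms(2)[OF model_nonempty] by simp
next
  case False
  hence c: "c > 0" using assms by simp
  have "a / c \<le> sigma s H x"
    by (rule sigma_ge) (use assms(2) c in \<open>simp add: divide_le_eq mult.commute\<close>)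
  thus ?thesis using c by (simp add: divide_le_eq mult.commute)
qed

lemma diff_in_model:
  assumes "u \<in> sparse_model l G" "v \<in> sparse_model l G"
  shows "u - v \<in> sparse_model (2*l) (Gdiff G)"
proof -
  obtain w1 where w1: "l0norm (u - G w1) \<le> l" using assms(1) unfolding sparse_model_def sparse_around_def by auto
  obtain w2 where w2: "l0norm (v - G w2) \<le> l" using assms(2) unfolding sparse_model_def sparse_around_def by auto
  have "u - v - Gdiff G (w1, w2) = (u - G w1) + (G w2 - v)" by (simp add: Gdiff_def algebra_simps)
  moreover have "l0norm (G w2 - v) = l0norm (v - G w2)"
    unfolding l0norm_def by (metis minus_diff_eq neg_equal_0_iff_equal vector_uminus_component)
  ultimately have "l0norm (u - v - Gdiff G (w1, w2)) \<le> 2*l" using l0_add[of "u - G w1" "G w2 - v"] w1 w2 by (simp only:)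
  thus ?thesis unfolding sparse_model_def sparse_around_def by blast
qed

lemma sigma_diff: "sigma (2*l) (Gdiff G) (x - y) \<le> sigma l G x + sigma l G y"
proof -
  have key: "sigma (2*l) (Gdiff G) (x - y) \<le> l1norm (x - u) + l1norm (y - v)"
    if "u \<in> sparse_model l G" "v \<in> sparse_model l G" for u v
  proof -
    have "sigma (2*l) (Gdiff G) (x - y) \<le> l1norm (x - y - (u - v))"
      by (rule sigma_le[OF diff_in_model[OF that]])
    also have "x - y - (u - v) = (x - u) + (v - y)" by (simp add: algebra_simps)
    also have "l1norm \<dots> \<le> l1norm (x - u) + l1norm (v - y)" by (rule l1_tri)
    finally show ?thesis by (simp add: l1_minus[of v y])
  qed
  have "sigma (2*l) (Gdiff G) (x - y) - l1norm (y - v) \<le> sigma l G x" if "v \<in> sparse_model l G" for v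
    by (rule sigma_ge) (use key that in force)
  hence "sigma (2*l) (Gdiff G) (x - y) - sigma l G x \<le> sigma l G y"
    by (intro sigma_ge) force
  thus ?thesis by simp
qed

lemma model_sigma0: "v \<in> sparse_model l G \<Longrightarrow> sigma l G v = 0"
  using sigma_le[of v l G v] sigma_nonneg[of l G v] by (simp add: l1norm_def)

lemma split_sparse:
  fixes \<nu> :: "real^'n"
  assumes "l0norm \<nu> \<le> 2*l"
  shows "\<exists>\<nu>1 \<nu>2. \<nu> = \<nu>1 + \<nu>2 \<and> l0norm \<nu>1 \<le> l \<and> l0norm \<nu>2 \<le> l"
proof -
  define Sp where "Sp = {i. \<nu> $ i \<noteq> 0}"
  have fin: "finite Sp" by simp
  obtain T where T: "T \<subseteq> Sp" "card T = min l (card Sp)"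
    using obtain_subset_with_card_n[of "min l (card Sp)" Sp] by auto
  define \<nu>1 where "\<nu>1 = (\<chi> i. if i \<in> T then \<nu> $ i else 0)"
  define \<nu>2 where "\<nu>2 = (\<chi> i. if i \<in> T then 0 else \<nu> $ i)"
  have e: "\<nu> = \<nu>1 + \<nu>2" unfolding \<nu>1_def \<nu>2_def by (simp add: vec_eq_iff)
  have "{i. \<nu>1 $ i \<noteq> 0} \<subseteq> T" unfolding \<nu>1_def by auto
  hence c1: "l0norm \<nu>1 \<le> l" unfolding l0norm_def using T
    by (metis (no_types, lifting) card_mono finite_subset fin min.bounded_iff order_refl)
  have "{i. \<nu>2 $ i \<noteq> 0} \<subseteq> Sp - T" unfolding \<nu>2_def Sp_def by auto
  hence "l0norm \<nu>2 \<le> card (Sp - T)" unfolding l0norm_def by (intro card_mono) auto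
  also have "card (Sp - T) = card Sp - card T" using T fin by (simp add: card_Diff_subset finite_subset)
  also have "\<dots> \<le> l" using T assms unfolding l0norm_def Sp_def by linarith
  finally show ?thesis using e c1 by blast
qed

theorem lemma3:
  fixes A :: "real^'n^'m" and G :: "real^'k \<Rightarrow> real^'n"
    and emax C0 C1 \<delta> t :: real and l :: nat
  assumes "emax \<ge> 0" and "l > 0" and "C0 \<ge> 0" and "C1 \<ge> 0" and "\<delta> \<ge> 0" and "t \<ge> 0"
  shows
   "(\<forall>\<Delta> :: real^'m \<Rightarrow> real^'n.
      ((\<forall>\<eta> \<in> tube A (2 * emax).
          norm \<eta> \<le> C0 / 2 * real l powr (- t) * sigma (2 * l) (Gdiff G) \<eta> + C1 * emax + \<delta>)
       \<and> (\<forall>y. (\<exists>z. norm (A *v z - y) \<le> emax) \<longrightarrow>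
              is_arg_min (sigma l G) (\<lambda>z. norm (A *v z - y) \<le> emax) (\<Delta> y)))
      \<longrightarrow> (\<forall>x \<epsilon>. norm \<epsilon> \<le> emax \<longrightarrow>
             norm (x - \<Delta> (A *v x + \<epsilon>)) \<le> C0 * real l powr (- t) * sigma l G x + C1 * emax + \<delta>))
    \<and>
    (\<forall>\<Delta> :: real^'m \<Rightarrow> real^'n.
      (\<forall>x \<epsilon>. norm \<epsilon> \<le> emax \<longrightarrow>
             norm (x - \<Delta> (A *v x + \<epsilon>)) \<le> C0 * real l powr (- t) * sigma l G x + C1 * emax + \<delta>)
      \<longrightarrow> (\<forall>\<eta> \<in> tube A emax.
            norm \<eta> \<le> C0 * real l powr (- t) * sigma (2 * l) (Gdiff G) \<eta> + 2 * C1 * emax + 2 * \<delta>))"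
proof (intro conjI allI impI ballI)
  define c where "c = real l powr (- t)"
  have c0: "c \<ge> 0" unfolding c_def by simp
  have cc: "C0 * c \<ge> 0" using c0 assms by simp
  fix \<Delta> :: "real^'m \<Rightarrow> real^'n" and x :: "real^'n" and \<epsilon> :: "real^'m"
  assume H: "(\<forall>\<eta> \<in> tube A (2 * emax).
          norm \<eta> \<le> C0 / 2 * real l powr (- t) * sigma (2 * l) (Gdiff G) \<eta> + C1 * emax + \<delta>)
       \<and> (\<forall>y. (\<exists>z. norm (A *v z - y) \<le> emax) \<longrightarrow>
              is_arg_min (sigma l G) (\<lambda>z. norm (A *v z - y) \<le> emax) (\<Delta> y))"
    and e: "norm \<epsilon> \<le> emax"
  define y where "y = A *v x + \<epsilon>"
  have fx: "norm (A *v x - y) \<le> emax" using e by (simp add: y_def)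
  hence am: "is_arg_min (sigma l G) (\<lambda>z. norm (A *v z - y) \<le> emax) (\<Delta> y)" using H by blast
  hence f2: "norm (A *v \<Delta> y - y) \<le> emax" and le: "sigma l G (\<Delta> y) \<le> sigma l G x"
    using fx unfolding is_arg_min_def by (auto simp: not_less)
  have "A *v (x - \<Delta> y) = (A *v x - y) - (A *v \<Delta> y - y)"
    by (simp add: matrix_vector_mult_diff_distrib)
  hence "norm (A *v (x - \<Delta> y)) \<le> 2 * emax"
    using norm_triangle_ineq4[of "A *v x - y" "A *v \<Delta> y - y"] fx f2 by simp
  hence "x - \<Delta> y \<in> tube A (2*emax)" unfolding tube_def by simp
  hence b: "norm (x - \<Delta> y) \<le> C0 / 2 * c * sigma (2 * l) (Gdiff G) (x - \<Delta> y) + C1 * emax + \<delta>"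
    using H unfolding c_def by blast
  have "sigma (2 * l) (Gdiff G) (x - \<Delta> y) \<le> 2 * sigma l G x" using sigma_diff[of l G x "\<Delta> y"] le by simp
  hence "C0 / 2 * c * sigma (2 * l) (Gdiff G) (x - \<Delta> y) \<le> C0 / 2 * c * (2 * sigma l G x)"
    by (intro mult_left_mono) (use cc in auto)
  with b show "norm (x - \<Delta> (A *v x + \<epsilon>)) \<le> C0 * real l powr (- t) * sigma l G x + C1 * emax + \<delta>"
    unfolding y_def c_def by simp
next
  define c where "c = real l powr (- t)"
  have c0: "c \<ge> 0" unfolding c_def by simp
  have cc: "C0 * c \<ge> 0" using c0 assms by simp
  fix \<Delta> :: "real^'m \<Rightarrow> real^'n" and \<eta> :: "real^'n"
  assume H: "\<forall>x \<epsilon>. norm \<epsilon> \<le> emax \<longrightarrow>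
             norm (x - \<Delta> (A *v x + \<epsilon>)) \<le> C0 * real l powr (- t) * sigma l G x + C1 * emax + \<delta>"
    and tu: "\<eta> \<in> tube A emax"
  have "norm \<eta> - 2 * C1 * emax - 2 * \<delta> \<le> (C0 * c) * sigma (2 * l) (Gdiff G) \<eta>"
  proof (rule sigma_ge_mult[OF cc])
    fix w assume "w \<in> sparse_model (2 * l) (Gdiff G)"
    then obtain z where z: "l0norm (w - Gdiff G z) \<le> 2*l"
      unfolding sparse_model_def sparse_around_def by auto
    obtain z1 z2 where zz: "z = (z1, z2)" by (cases z)
    define \<nu> where "\<nu> = w - (G z1 - G z2)"
    obtain \<nu>1 \<nu>2 where nu: "\<nu> = \<nu>1 + \<nu>2" "l0norm \<nu>1 \<le> l" "l0norm \<nu>2 \<le> l"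
      using split_sparse[of \<nu> l] z unfolding \<nu>_def zz Gdiff_def by auto
    define h where "h = \<eta> - w"
    define x1 where "x1 = G z1 + \<nu>1 + h"
    define x2 where "x2 = G z2 - \<nu>2"
    have eta: "\<eta> = x1 - x2" unfolding x1_def x2_def h_def using nu(1) \<nu>_def by (simp add: algebra_simps)
    have m1: "G z1 + \<nu>1 \<in> sparse_model l G"
      unfolding sparse_model_def sparse_around_def using nu(2) by (auto intro!: exI[where x=z1])
    have "l0norm (x2 - G z2) = l0norm \<nu>2" unfolding x2_def l0norm_def by simp
    hence m2: "x2 \<in> sparse_model l G"
      unfolding sparse_model_def sparse_around_def using nu(3) by (auto intro!: exI[where x=z2])
    have s1: "sigma l G x1 \<le> l1norm h" using sigma_le[OF m1, of x1] by (simp add: x1_def)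
    have s2: "sigma l G x2 = 0" by (rule model_sigma0[OF m2])
    define y where "y = A *v x1"
    have y2: "y = A *v x2 + A *v \<eta>" unfolding y_def eta by (simp add: matrix_vector_mult_diff_distrib)
    have "norm (x1 - \<Delta> (A *v x1 + 0)) \<le> C0 * c * sigma l G x1 + C1 * emax + \<delta>"
      using H assms(1) unfolding c_def by (metis norm_zero)
    hence b1: "norm (x1 - \<Delta> y) \<le> C0 * c * l1norm h + C1 * emax + \<delta>"
      using mult_left_mono[OF s1 cc] by (simp add: y_def)
    have "norm (A *v \<eta>) \<le> emax" using tu unfolding tube_def by simp
    hence b2: "norm (x2 - \<Delta> y) \<le> C1 * emax + \<delta>"
      using H[rule_format, of "A *v \<eta>" x2] s2 unfolding y2 by simp
    have "norm \<eta> \<le> norm (x1 - \<Delta> y) + norm (x2 - \<Delta> y)"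
      unfolding eta using norm_triangle_ineq4[of "x1 - \<Delta> y" "x2 - \<Delta> y"] by simp
    with b1 b2 show "norm \<eta> - 2 * C1 * emax - 2 * \<delta> \<le> C0 * c * l1norm (\<eta> - w)"
      unfolding h_def by linarith
  qed
  thus "norm \<eta> \<le> C0 * real l powr (- t) * sigma (2 * l) (Gdiff G) \<eta> + 2 * C1 * emax + 2 * \<delta>"
    unfolding c_def by simp
qed

end
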